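(* Consider online Min Sum Set Cover in the bandit setting with $n$ boxes (all box values in $\{0,\infty\}$, one box to be selected). There is an online algorithm $\mathcal{A}$ such that $\mathbb{E}\Big[\frac1T\sum_{t=1}^T\big(\mathcal{A}(t)-\mathrm{OPT}\big)\Big]\le \mathrm{OPT}+O\!\left(\frac{n^2}{\sqrt{T}}\right),$ where $\mathcal{A}(t)$ is the algorithm's cost in round $t$ and $\mathrm{OPT}$ is the per-round cost of the optimal non-adaptive strategy.
   Context: Online Min Sum Set Cover: there are $n$ boxes $\mathcal{B}=\{1,\dots,n\}$. An oblivious adversary fixes in advance, for each round $t=1,\dots,T$, a scenario $c(t)\in\{0,\infty\}^n$ (each scenario has at least one box of value $0$). In each round the algorithm opens boxes one at a time, observing each opened box's value, and stops having selected an opened box; its cost in round $t$ is the number of opened boxes plus the value of the selected box. Bandit setting: the algorithm only learns the values of boxes it opened. A non-adaptive strategy opens the same fixed set $S\subseteq\mathcal{B}$ in every round and selects its cheapest box; in this $0/\infty$ case its per-round cost is $|S|$ if $S$ contains a value-$0$ box in every round (and $\infty$ otherwise), and $\mathrm{OPT}$ is the minimum of this cost over all $S$. *)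

theory Defs
  imports "HOL-Probability.Probability"
begin

text \<open>Boxes are the natural numbers 0..n-1.  A scenario for a round is a value
  vector c :: nat => ennreal (only the entries below n matter); in the 0/infinity
  case every entry is 0 or infinity.\<close>

type_synonym obs = "(nat \<times> ennreal) list"   \<comment> \<open>boxes opened in a round, with observed values\<close>

datatype action = Open nat | Select nat

text \<open>A within-round (adaptive) policy: from the observations made so far in the
  round, decide to open a further box or to stop and select a box.\<close>
type_synonym policy = "obs \<Rightarrow> action"

text \<open>A deterministic online algorithm: the policy used in a round depends only on
  the bandit feedback of the earlier rounds (the observation lists of those rounds).\<close>
type_synonym det_alg = "obs list \<Rightarrow> policy"

text \<open>Invalid behaviour (opening a non-box, selecting an unopened box,
  running out of fuel) is charged infinite cost.\<close>
fun run_round :: "nat \<Rightarrow> policy \<Rightarrow> (nat \<Rightarrow> ennreal) \<Rightarrow> nat \<Rightarrow> obs \<Rightarrow> obs \<times> ennreal" where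
  "run_round n p c 0 os = (os, \<infinity>)"
| "run_round n p c (Suc k) os =
     (case p os of
        Open b \<Rightarrow> (if b < n then run_round n p c k (os @ [(b, c b)]) else (os, \<infinity>))
      | Select b \<Rightarrow> (os, if b \<in> fst ` set os then of_nat (length os) + c b else \<infinity>))"

text \<open>History (feedback of rounds 1..t) of a deterministic algorithm against the
  scenario sequence c (c t is the scenario of round t, t >= 1).\<close>
fun history :: "nat \<Rightarrow> det_alg \<Rightarrow> (nat \<Rightarrow> nat \<Rightarrow> ennreal) \<Rightarrow> nat \<Rightarrow> obs list" where
  "history n D c 0 = []"
| "history n D c (Suc t) =
     (let h = history n D c t in h @ [fst (run_round n (D h) (c (Suc t)) (Suc n) [])])"

definition round_cost :: "nat \<Rightarrow> det_alg \<Rightarrow> (nat \<Rightarrow> nat \<Rightarrow> ennreal) \<Rightarrow> nat \<Rightarrow> ennreal" where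
  "round_cost n D c t = snd (run_round n (D (history n D c (t - 1))) (c t) (Suc n) [])"

text \<open>Per-round cost of the non-adaptive strategy that opens S every round and
  selects its cheapest box (0/infinity case), and OPT.\<close>
definition na_cost :: "nat \<Rightarrow> (nat \<Rightarrow> nat \<Rightarrow> ennreal) \<Rightarrow> nat set \<Rightarrow> ennreal" where
  "na_cost T c S = (if \<forall>t\<in>{1..T}. \<exists>b\<in>S. c t b = 0 then of_nat (card S) else \<infinity>)"

definition OPT :: "nat \<Rightarrow> nat \<Rightarrow> (nat \<Rightarrow> nat \<Rightarrow> ennreal) \<Rightarrow> ennreal" where
  "OPT n T c = (INF S \<in> Pow {..<n}. na_cost T c S)"

definition valid_scenarios :: "nat \<Rightarrow> nat \<Rightarrow> (nat \<Rightarrow> nat \<Rightarrow> ennreal) \<Rightarrow> bool" where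
  "valid_scenarios n T c \<longleftrightarrow>
     (\<forall>t\<in>{1..T}. (\<forall>b<n. c t b = 0 \<or> c t b = \<infinity>) \<and> (\<exists>b<n. c t b = 0))"

end

theory Submission
  imports Defs
begin


definition pol_all :: "nat \<Rightarrow> policy" where
  "pol_all n os = (if length os < n then Open (length os)
     else (case find (\<lambda>x. snd x = 0) os of Some x \<Rightarrow> Select (fst x) | None \<Rightarrow> Select 0))"

definition pol_ord :: "nat list \<Rightarrow> policy" where
  "pol_ord L os = (case find (\<lambda>x. snd x = 0) os of Some x \<Rightarrow> Select (fst x) | None \<Rightarrow> Open (L ! length os))"

definition obsof :: "(nat \<Rightarrow> ennreal) \<Rightarrow> nat list \<Rightarrow> obs" where
  "obsof c L = map (\<lambda>b. (b, c b)) L"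

lemma find_app_None: "find P xs = None \<Longrightarrow> find P (xs @ ys) = find P ys"
  by (induction xs) auto

lemma run_all:
  assumes "\<exists>b<n. c b = 0"
  shows "i \<le> n \<Longrightarrow> n - i < fuel \<Longrightarrow>
    run_round n (pol_all n) c fuel (obsof c [0..<i]) = (obsof c [0..<n], of_nat n)"
proof (induction fuel arbitrary: i)
  case 0 then show ?case by simp
next
  case (Suc f)
  show ?case
  proof (cases "i < n")
    case True
    have "obsof c [0..<i] @ [(i, c i)] = obsof c [0..<Suc i]" by (simp add: obsof_def)
    with Suc.IH[of "Suc i"] Suc.prems True show ?thesis by (simp add: pol_all_def obsof_def)
  next
    case False
    then have i: "i = n" using Suc.prems by simp
    obtain b where b: "b < n" "c b = 0" using assms by auto
    have "find (\<lambda>x. snd x = 0) (obsof c [0..<n]) \<noteq> None"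
      using b by (auto simp: find_None_iff obsof_def)
    then obtain x where x: "find (\<lambda>x. snd x = 0) (obsof c [0..<n]) = Some x" by auto
    then have "x \<in> set (obsof c [0..<n])" "snd x = 0"
      by (auto dest!: find_Some_iff[THEN iffD1] simp: nth_mem)
    then have "fst x \<in> fst ` set (obsof c [0..<n])" "c (fst x) = 0"
      by (auto simp: obsof_def)
    then show ?thesis using i x by (simp add: pol_all_def obsof_def)
  qed
qed

lemma run_ord:
  assumes L: "set L \<subseteq> {..<n}" and j: "j < length L" "c (L ! j) = 0"
    and before: "\<forall>l<j. c (L ! l) \<noteq> 0"
  shows "i \<le> j \<Longrightarrow> j - i < fuel - 1 \<Longrightarrow>
    run_round n (pol_ord L) c fuel (obsof c (take i L)) = (obsof c (take (Suc j) L), of_nat (Suc j))"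
proof (induction fuel arbitrary: i)
  case 0 then show ?case by simp
next
  case (Suc f)
  have nf: "find (\<lambda>x. snd x = 0) (obsof c (take i L)) = None"
    using Suc.prems before j by (auto simp: find_None_iff obsof_def in_set_conv_nth)
  have li: "length (obsof c (take i L)) = i" using Suc.prems j by (simp add: obsof_def)
  have Li: "L ! i < n" using L j Suc.prems by (meson le_less_trans lessThan_iff nth_mem subsetD)
  have app: "obsof c (take i L) @ [(L ! i, c (L ! i))] = obsof c (take (Suc i) L)"
    using Suc.prems j by (simp add: obsof_def take_Suc_conv_app_nth)
  show ?case
  proof (cases "i < j")
    case True
    with Suc.IH[of "Suc i"] Suc.prems nf li Li app show ?thesis by (simp add: pol_ord_def)
  next
    case False
    then have i: "i = j" using Suc.prems by simp
    then obtain f' where f: "f = Suc f'" using Suc.prems by (cases f) auto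
    have fz: "find (\<lambda>x. snd x = 0) (obsof c (take (Suc j) L)) = Some (L ! j, c (L ! j))"
      using before j nf[unfolded i] by (simp add: obsof_def take_Suc_conv_app_nth find_app_None)
    have mem: "L ! j \<in> fst ` set (obsof c (take (Suc j) L))"
      using j by (simp add: obsof_def take_Suc_conv_app_nth)
    have "length (obsof c (take (Suc j) L)) = Suc j" using j by (simp add: obsof_def)
    then show ?thesis using i nf li Li app f fz mem j by (simp add: pol_ord_def)
  qed
qed

lemma run_faithful:
  "\<forall>x\<in>set os. fst x < n \<and> snd x = c (fst x) \<Longrightarrow>
   \<forall>x\<in>set (fst (run_round n p c fuel os)). fst x < n \<and> snd x = c (fst x)"
proof (induction fuel arbitrary: os)
  case 0 then show ?case by simp
next
  case (Suc f)
  show ?case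
  proof (cases "p os")
    case (Open b)
    then show ?thesis using Suc.IH[of "os @ [(b, c b)]"] Suc.prems by auto
  next
    case (Select b) then show ?thesis using Suc.prems by simp
  qed
qed



definition Lof :: "nat \<Rightarrow> nat set \<Rightarrow> nat list" where
  "Lof n S = sorted_list_of_set S @ filter (\<lambda>b. b \<notin> S) [0..<n]"

lemma Lof_set: "S \<subseteq> {..<n} \<Longrightarrow> set (Lof n S) = {..<n}"
  using finite_subset[of S "{..<n}"] by (auto simp: Lof_def)

lemma Lof_len: "S \<subseteq> {..<n} \<Longrightarrow> length (Lof n S) = n"
proof -
  assume S: "S \<subseteq> {..<n}"
  then have fin: "finite S" using finite_subset by blast
  have "length (filter (\<lambda>b. b \<notin> S) [0..<n]) = card ({..<n} - S)"
    by (subst distinct_length_filter) (auto intro: arg_cong[where f=card])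
  also have "\<dots> = n - card S" using S fin by (simp add: card_Diff_subset)
  finally show ?thesis using S fin card_mono[of "{..<n}" S] by (simp add: Lof_def)
qed

lemma Lof_nth_S: "S \<subseteq> {..<n} \<Longrightarrow> l < card S \<Longrightarrow> Lof n S ! l \<in> S"
proof -
  assume S: "S \<subseteq> {..<n}" and l: "l < card S"
  then have fin: "finite S" using finite_subset by blast
  then have "Lof n S ! l = sorted_list_of_set S ! l" using l by (simp add: Lof_def nth_append)
  then show ?thesis using l fin
    by (metis length_sorted_list_of_set nth_mem set_sorted_list_of_set)
qed

lemma Lof_index_S: "S \<subseteq> {..<n} \<Longrightarrow> b \<in> S \<Longrightarrow> \<exists>l<card S. Lof n S ! l = b"
proof -
  assume S: "S \<subseteq> {..<n}" and b: "b \<in> S"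
  then have fin: "finite S" using finite_subset by blast
  then obtain l where "l < length (sorted_list_of_set S)" "sorted_list_of_set S ! l = b"
    using b by (metis in_set_conv_nth set_sorted_list_of_set)
  then show ?thesis using fin by (auto simp: Lof_def nth_append)
qed

lemma exploit_cost:
  assumes S: "S \<subseteq> {..<n}" and z: "\<exists>b<n. c b = 0"
  shows "snd (run_round n (pol_ord (Lof n S)) c (Suc n) []) \<le>
           of_nat (if S \<inter> {b. c b = 0} \<noteq> {} then card S else n)"
proof -
  define L where "L = Lof n S"
  have len: "length L = n" using Lof_len[OF S] by (simp add: L_def)
  have setL: "set L = {..<n}" using Lof_set[OF S] by (simp add: L_def)
  define P where "P = (\<lambda>l. l < length L \<and> c (L ! l) = 0)"
  obtain b where b: "b < n" "c b = 0" using z by auto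
  then obtain l0 where "P l0" using setL by (metis P_def in_set_conv_nth lessThan_iff)
  define j where "j = (LEAST l. P l)"
  have Pj: "P j" using \<open>P l0\<close> j_def by (metis LeastI)
  have before: "\<forall>l<j. c (L ! l) \<noteq> 0"
  proof (intro allI impI)
    fix l assume "l < j"
    then have "\<not> P l" using j_def not_less_Least by blast
    moreover have "l < length L" using \<open>l < j\<close> Pj P_def by simp
    ultimately show "c (L ! l) \<noteq> 0" by (simp add: P_def)
  qed
  have "run_round n (pol_ord L) c (Suc n) (obsof c (take 0 L)) = (obsof c (take (Suc j) L), of_nat (Suc j))"
    using run_ord[of L n j c 0 "Suc n"] setL Pj before len by (auto simp: P_def)
  then have cost: "snd (run_round n (pol_ord L) c (Suc n) []) = of_nat (Suc j)"
    by (simp add: obsof_def)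
  show ?thesis
  proof (cases "S \<inter> {b. c b = 0} \<noteq> {}")
    case True
    then obtain b' where "b' \<in> S" "c b' = 0" by auto
    then obtain l where l: "l < card S" "L ! l = b'" using Lof_index_S[OF S] L_def by blast
    have "card S \<le> n" using S by (metis card_lessThan card_mono finite_lessThan)
    then have "P l" using l \<open>c b' = 0\<close> len by (simp add: P_def)
    then have "j \<le> l" using j_def Least_le by blast
    then have "Suc j \<le> card S" using l by simp
    then have "(of_nat (Suc j) :: ennreal) \<le> of_nat (card S)" by (rule of_nat_mono)
    then show ?thesis using True cost unfolding L_def by (simp del: run_round.simps of_nat_Suc)
  next
    case False
    have "Suc j \<le> n" using Pj len by (simp add: P_def)
    then have "(of_nat (Suc j) :: ennreal) \<le> of_nat n" by (rule of_nat_mono)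
    then show ?thesis using False cost unfolding L_def by (simp del: run_round.simps of_nat_Suc)
  qed
qed

lemma explore_run: "\<exists>b<n. c b = 0 \<Longrightarrow>
  run_round n (pol_all n) c (Suc n) [] = (obsof c [0..<n], of_nat n)"
  using run_all[of n c 0 "Suc n"] by (simp add: obsof_def)



definition Zof :: "obs \<Rightarrow> nat set" where "Zof os = {b. (b, 0) \<in> set os}"
definition Kn :: "nat \<Rightarrow> obs list \<Rightarrow> nat set set" where
  "Kn n h = Zof ` {os \<in> set h. {..<n} \<subseteq> fst ` set os}"
definition Vj :: "nat \<Rightarrow> obs list \<Rightarrow> nat \<Rightarrow> nat set set" where
  "Vj n h j = {S \<in> Pow {..<n}. card S = j \<and> (\<forall>Z\<in>Kn n h. S \<inter> Z \<noteq> {})}"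
definition kk :: "nat \<Rightarrow> obs list \<Rightarrow> nat" where "kk n h = (LEAST j. Vj n h j \<noteq> {})"
definition H :: "nat \<Rightarrow> real" where "H m = (\<Sum>i=1..m. 1 / real i)"
definition Phi :: "nat \<Rightarrow> obs list \<Rightarrow> real" where "Phi n h = (\<Sum>j\<le>n. H (card (Vj n h j)))"

lemma H_Suc: "H (Suc m) = H m + 1 / real (Suc m)"
  by (simp add: H_def)

lemma H_nonneg: "0 \<le> H m"
  by (simp add: H_def sum_nonneg)

lemma H_mono: "m \<le> m' \<Longrightarrow> H m \<le> H m'"
proof (induction m' rule: dec_induct)
  case base then show ?case by simp
next
  case (step k)
  have "0 \<le> 1 / real (Suc k)" by simp
  then show ?case using step H_Suc[of k] by linarith
qed

lemma H_grow: "H (m + d) \<le> H m + real d / real (Suc m)"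
proof (induction d)
  case 0 then show ?case by simp
next
  case (Suc d)
  have "1 / real (Suc (m + d)) \<le> 1 / real (Suc m)" by (simp add: frac_le)
  then show ?case using Suc by (simp add: H_Suc add_divide_distrib)
qed

lemma H_pow: "H (2 ^ k) \<le> real k + 1"
proof (induction k)
  case 0 then show ?case by (simp add: H_def)
next
  case (Suc k)
  have "H (2 ^ Suc k) = H (2 ^ k + 2 ^ k)" by (simp add: mult_2)
  also have "\<dots> \<le> H (2 ^ k) + real (2 ^ k) / real (Suc (2 ^ k))" by (rule H_grow)
  also have "real (2 ^ k) / real (Suc (2 ^ k)) \<le> 1" by (simp add: divide_le_eq_1 add_pos_pos)
  finally show ?case using Suc by simp
qed

lemma H_drop: "m \<le> v \<Longrightarrow> 0 < v \<Longrightarrow> real m / real v \<le> H v - H (v - m)"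
proof (induction m)
  case 0 then show ?case by simp
next
  case (Suc m)
  have "v - m = Suc (v - Suc m)" using Suc by simp
  then have "H (v - m) = H (v - Suc m) + 1 / real (v - m)" by (simp add: H_Suc)
  moreover have "1 / real v \<le> 1 / real (v - m)" using Suc by (simp add: frac_le)
  moreover have "real (Suc m) / real v = real m / real v + 1 / real v" by (simp add: add_divide_distrib)
  ultimately show ?case using Suc by simp
qed

lemma Kn_app: "Kn n (h @ [os]) = (if {..<n} \<subseteq> fst ` set os then insert (Zof os) (Kn n h) else Kn n h)"
  by (auto simp: Kn_def)

lemma Vj_mono: "Vj n (h @ [os]) j \<subseteq> Vj n h j"
  by (auto simp: Vj_def Kn_app)

lemma Vj_full: "{..<n} \<subseteq> fst ` set os \<Longrightarrow> Vj n (h @ [os]) j = {S \<in> Vj n h j. S \<inter> Zof os \<noteq> {}}"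
  by (auto simp: Vj_def Kn_app)

lemma Vj_fin: "finite (Vj n h j)"
  by (rule finite_subset[of _ "Pow {..<n}"]) (auto simp: Vj_def)

lemma Vj_card: "card (Vj n h j) \<le> 2 ^ n"
proof -
  have "card (Vj n h j) \<le> card (Pow {..<n})"
    by (rule card_mono) (auto simp: Vj_def)
  then show ?thesis by (simp add: card_Pow)
qed

lemma Phi_nonneg: "0 \<le> Phi n h"
  by (simp add: Phi_def sum_nonneg H_nonneg)

lemma Phi_bound: "Phi n h \<le> (real n + 1) ^ 2"
proof -
  have "Phi n h \<le> (\<Sum>j\<le>n. real n + 1)"
    unfolding Phi_def
    by (rule sum_mono) (meson H_mono H_pow Vj_card order_trans)
  then show ?thesis by (simp add: power2_eq_square algebra_simps)
qed

lemma Phi_mono: "Phi n (h @ [os]) \<le> Phi n h"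
  unfolding Phi_def
  by (rule sum_mono) (simp add: H_mono Vj_fin Vj_mono card_mono)

lemma Phi_drop:
  assumes full: "{..<n} \<subseteq> fst ` set os" and k: "k \<le> n" and V: "Vj n h k \<noteq> {}"
  shows "Phi n (h @ [os]) + real (card {S \<in> Vj n h k. S \<inter> Zof os = {}}) / real (card (Vj n h k)) \<le> Phi n h"
proof -
  define V where "V = Vj n h k"
  define M where "M = {S \<in> V. S \<inter> Zof os = {}}"
  have fin: "finite V" by (simp add: V_def Vj_fin)
  have new: "Vj n (h @ [os]) k = V - M" using Vj_full[OF full] by (auto simp: V_def M_def)
  have cardnew: "card (V - M) = card V - card M"
    using fin by (intro card_Diff_subset) (auto simp: M_def intro: finite_subset)
  have MV: "card M \<le> card V" using fin by (intro card_mono) (auto simp: M_def)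
  have pos: "0 < card V" using V fin by (simp add: V_def card_gt_0_iff)
  have dropk: "H (card (Vj n (h @ [os]) k)) + real (card M) / real (card V) \<le> H (card V)"
    using H_drop[OF MV pos] new cardnew by simp
  have split1: "Phi n (h @ [os]) = H (card (Vj n (h @ [os]) k)) + (\<Sum>j\<in>{..n}-{k}. H (card (Vj n (h @ [os]) j)))"
    unfolding Phi_def using k by (subst sum.remove[of _ k]) auto
  have split2: "Phi n h = H (card V) + (\<Sum>j\<in>{..n}-{k}. H (card (Vj n h j)))"
    unfolding Phi_def V_def using k by (subst sum.remove[of _ k]) auto
  have "(\<Sum>j\<in>{..n}-{k}. H (card (Vj n (h @ [os]) j))) \<le> (\<Sum>j\<in>{..n}-{k}. H (card (Vj n h j)))"
    by (rule sum_mono) (simp add: H_mono Vj_fin Vj_mono card_mono)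
  then show ?thesis using split1 split2 dropk by (simp add: V_def M_def)
qed

lemma Zof_full: "Zof (obsof c [0..<n]) = {b. b < n \<and> c b = 0}"
  by (auto simp: Zof_def obsof_def)

lemma full_full: "{..<n} \<subseteq> fst ` set (obsof c [0..<n])"
  by (auto simp: obsof_def image_image)



type_synonym seed = "bool \<times> (nat set set \<Rightarrow> nat set)"

definition Dpol :: "nat \<Rightarrow> seed \<Rightarrow> obs list \<Rightarrow> policy" where
  "Dpol n y h = (if fst y then pol_all n else pol_ord (Lof n (snd y (Vj n h (kk n h)))))"

definition Dr :: "nat \<Rightarrow> (nat \<Rightarrow> seed) \<Rightarrow> det_alg" where
  "Dr n r h = Dpol n (r (Suc (length h))) h"

definition chooser :: "nat \<Rightarrow> (nat set set \<Rightarrow> nat set) pmf" where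
  "chooser n = Pi_pmf (Pow (Pow {..<n})) {} (\<lambda>V. if V = {} then return_pmf {} else pmf_of_set V)"

definition mu :: "nat \<Rightarrow> real \<Rightarrow> seed pmf" where
  "mu n p = pair_pmf (bernoulli_pmf p) (chooser n)"

lemma chooser_comp:
  assumes "V \<subseteq> Pow {..<n}" "V \<noteq> {}"
  shows "(\<integral>\<^sup>+ g. F (g V) \<partial>chooser n) = (\<integral>\<^sup>+ S. F S \<partial>pmf_of_set V)"
proof -
  have "(\<integral>\<^sup>+ g. F (g V) \<partial>chooser n) = (\<integral>\<^sup>+ S. F S \<partial>map_pmf (\<lambda>g. g V) (chooser n))"
    by simp
  also have "map_pmf (\<lambda>g. g V) (chooser n) = pmf_of_set V"
    using assms unfolding chooser_def by (subst Pi_pmf_component) auto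
  finally show ?thesis .
qed

lemma real_ineq:
  fixes p a n k ks f P P' :: real
  assumes "0 \<le> p" "p \<le> 1" "0 \<le> a" "(1 - p) * n \<le> p * a" "0 \<le> k" "k \<le> ks" "0 \<le> f"
    "P' + f \<le> P"
  shows "(n + a * P') * p + (k + a * P + n * f) * (1 - p) \<le> ks + p * n + a * P"
proof -
  have 0: "a * (P' + f) \<le> a * P" using assms by (intro mult_left_mono) auto
  have 1: "p * (a * P') \<le> p * (a * P - a * f)"
    using assms 0 by (intro mult_left_mono) (auto simp: algebra_simps)
  have 2: "(1 - p) * n * f \<le> p * a * f"
    using assms by (intro mult_right_mono) auto
  have 3: "(1 - p) * k \<le> ks"
  proof -
    have "(1 - p) * k \<le> (1 - p) * ks" using assms by (intro mult_left_mono) auto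
    moreover have "(1 - p) * ks \<le> 1 * ks" using assms by (intro mult_right_mono) auto
    ultimately show ?thesis by linarith
  qed
  show ?thesis using 1 2 3 by (simp add: algebra_simps)
qed

lemma round_step:
  fixes c :: "nat \<Rightarrow> ennreal"
  assumes Ss: "Ss \<in> Vj n h ks" and hit: "\<exists>b\<in>Ss. c b = 0"
    and p: "0 \<le> p" "p \<le> 1" and a: "0 \<le> a" "(1 - p) * real n \<le> p * a"
  shows "(\<integral>\<^sup>+ y. snd (run_round n (Dpol n y h) c (Suc n) []) +
            ennreal (a * Phi n (h @ [fst (run_round n (Dpol n y h) c (Suc n) [])])) \<partial>mu n p)
        \<le> ennreal (real ks + p * real n + a * Phi n h)"
proof -
  define k where "k = kk n h"
  define V where "V = Vj n h k"
  have ne: "Vj n h ks \<noteq> {}" using Ss by auto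
  have kks: "k \<le> ks" unfolding k_def kk_def using ne by (rule Least_le)
  have Vne: "V \<noteq> {}" unfolding V_def k_def kk_def using ne by (rule LeastI)
  have VP: "V \<subseteq> Pow {..<n}" by (auto simp: V_def Vj_def)
  have Vk: "\<forall>S\<in>V. card S = k" by (auto simp: V_def Vj_def)
  have Vfin: "finite V" by (simp add: V_def Vj_fin)
  have kn: "k \<le> n"
  proof -
    obtain S where "S \<in> V" using Vne by auto
    then have "S \<subseteq> {..<n}" "card S = k" using VP Vk by auto
    then show ?thesis by (metis card_lessThan card_mono finite_lessThan)
  qed
  have Ssub: "Ss \<subseteq> {..<n}" using Ss by (auto simp: Vj_def)
  have z: "\<exists>b<n. c b = 0" using hit Ssub by auto
  define full where "full = obsof c [0..<n]"
  define M where "M = {S \<in> V. S \<inter> Zof full = {}}"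
  define f where "f = real (card M) / real (card V)"
  have f0: "0 \<le> f" by (simp add: f_def)
  have drop: "Phi n (h @ [full]) + f \<le> Phi n h"
    using Phi_drop[OF full_full kn Vne[unfolded V_def]] by (simp add: f_def M_def V_def full_def)
  define R where "R = (\<lambda>S. run_round n (pol_ord (Lof n S)) c (Suc n) [])"
  define F where "F = (\<lambda>y. snd (run_round n (Dpol n y h) c (Suc n) []) +
            ennreal (a * Phi n (h @ [fst (run_round n (Dpol n y h) c (Suc n) [])])))"
  define G where "G = (\<lambda>S. snd (R S) + ennreal (a * Phi n (h @ [fst (R S)])))"
  have FT: "F (True, g) = of_nat n + ennreal (a * Phi n (h @ [full]))" for g
    using explore_run[OF z] by (simp add: F_def Dpol_def full_def)
  have FF: "F (False, g) = G (g V)" for g by (simp add: F_def G_def Dpol_def V_def k_def R_def del: run_round.simps)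
  define gb where "gb = (\<lambda>S. real k + a * Phi n h + real n * indicator M S)"
  have Gb: "G S \<le> ennreal (gb S)" if "S \<in> V" for S
  proof -
    have S: "S \<subseteq> {..<n}" "card S = k" using that VP Vk by auto
    have c1: "snd (R S) \<le> of_nat (if S \<inter> {b. c b = 0} \<noteq> {} then k else n)"
      using exploit_cost[OF S(1) z] by (simp only: R_def S(2))
    have "S \<inter> {b. c b = 0} = {} \<longleftrightarrow> S \<in> M" using that S(1)
      by (auto simp: M_def full_def Zof_full)
    then have c2: "snd (R S) \<le> ennreal (real k + real n * indicator M S)"
      using c1 by (auto simp: ennreal_of_nat_eq_real_of_nat split: if_splits intro: order_trans[OF _ add_increasing[OF zero_le order.refl]])
    have "a * Phi n (h @ [fst (R S)]) \<le> a * Phi n h" using a by (intro mult_left_mono Phi_mono) auto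
    then have c3: "ennreal (a * Phi n (h @ [fst (R S)])) \<le> ennreal (a * Phi n h)" by (rule ennreal_leI)
    have "G S \<le> ennreal (real k + real n * indicator M S) + ennreal (a * Phi n h)"
      unfolding G_def using add_mono[OF c2 c3] .
    also have "\<dots> = ennreal (gb S)" using a Phi_nonneg[of n h]
      by (simp add: gb_def ennreal_plus[symmetric] algebra_simps del: ennreal_plus)
    finally show ?thesis .
  qed
  have sumgb: "sum gb V = real (card V) * (real k + a * Phi n h) + real n * real (card M)"
  proof -
    have "sum (indicator M) V = real (card (V \<inter> M))" using Vfin by (simp add: indicator_def sum.If_cases Int_def)
    moreover have "V \<inter> M = M" by (auto simp: M_def)
    ultimately show ?thesis by (simp add: gb_def sum.distrib sum_distrib_left[symmetric] algebra_simps)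
  qed
  have cV: "0 < real (card V)" using Vne Vfin by (simp add: card_gt_0_iff)
  have intF: "(\<integral>\<^sup>+ g. F (False, g) \<partial>chooser n) \<le> ennreal (real k + a * Phi n h + real n * f)"
  proof -
    have "(\<integral>\<^sup>+ g. F (False, g) \<partial>chooser n) = (\<integral>\<^sup>+ S. G S \<partial>pmf_of_set V)"
      unfolding FF by (rule chooser_comp[OF VP Vne])
    also have "\<dots> \<le> (\<integral>\<^sup>+ S. ennreal (gb S) \<partial>pmf_of_set V)"
      using Vne Vfin by (intro nn_integral_mono_AE) (auto simp: AE_measure_pmf_iff Gb)
    also have "\<dots> = (\<Sum>S\<in>V. ennreal (gb S)) / of_nat (card V)"
      using Vne Vfin by (simp add: nn_integral_pmf_of_set)
    also have "\<dots> = ennreal (sum gb V) / ennreal (real (card V))"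
      using a Phi_nonneg[of n h] by (subst sum_ennreal) (auto simp: gb_def ennreal_of_nat_eq_real_of_nat)
    also have "\<dots> = ennreal (sum gb V / real (card V))"
      using a Phi_nonneg[of n h] cV by (intro divide_ennreal) (auto simp: gb_def intro!: sum_nonneg)
    also have "sum gb V / real (card V) = real k + a * Phi n h + real n * f"
      using cV by (simp add: sumgb f_def field_simps)
    finally show ?thesis .
  qed
  have "(\<integral>\<^sup>+ y. F y \<partial>mu n p) = (\<integral>\<^sup>+ e. \<integral>\<^sup>+ g. F (e, g) \<partial>chooser n \<partial>bernoulli_pmf p)"
    by (simp add: mu_def nn_integral_pair_pmf')
  also have "\<dots> = (\<integral>\<^sup>+ g. F (True, g) \<partial>chooser n) * ennreal p + (\<integral>\<^sup>+ g. F (False, g) \<partial>chooser n) * ennreal (1 - p)"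
    using p by simp
  also have "(\<integral>\<^sup>+ g. F (True, g) \<partial>chooser n) = ennreal (real n + a * Phi n (h @ [full]))"
    using a Phi_nonneg[of n "h @ [full]"] by (simp add: FT ennreal_of_nat_eq_real_of_nat)
  also have "ennreal (real n + a * Phi n (h @ [full])) * ennreal p + (\<integral>\<^sup>+ g. F (False, g) \<partial>chooser n) * ennreal (1 - p)
      \<le> ennreal (real n + a * Phi n (h @ [full])) * ennreal p + ennreal (real k + a * Phi n h + real n * f) * ennreal (1 - p)"
    using intF by (intro add_mono mult_right_mono) auto
  also have "\<dots> = ennreal ((real n + a * Phi n (h @ [full])) * p + (real k + a * Phi n h + real n * f) * (1 - p))"
    using a p f0 Phi_nonneg[of n h] Phi_nonneg[of n "h @ [full]"]
    by (simp add: ennreal_mult'[symmetric] ennreal_plus[symmetric] del: ennreal_plus)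
  also have "\<dots> \<le> ennreal (real ks + p * real n + a * Phi n h)"
    using real_ineq[OF p a, where P="Phi n h" and P'="Phi n (h @ [full])" and f=f and k="real k" and ks="real ks"] kks f0 drop
    by (intro ennreal_leI) simp
  finally show ?thesis unfolding F_def .
qed



lemma hist_len: "length (history n D c t) = t"
  by (induction t) (simp_all add: Let_def)

lemma hist_cong: "(\<And>i. 1 \<le> i \<Longrightarrow> i \<le> t \<Longrightarrow> r i = r' i) \<Longrightarrow>
  history n (Dr n r) c t = history n (Dr n r') c t"
proof (induction t)
  case 0 then show ?case by simp
next
  case (Suc t)
  then have IH: "history n (Dr n r) c t = history n (Dr n r') c t" by simp
  have "r (Suc t) = r' (Suc t)" using Suc.prems by simp
  then have d: "Dr n r (history n (Dr n r') c t) = Dr n r' (history n (Dr n r') c t)"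
    by (simp add: Dr_def hist_len)
  show ?case using IH d by (simp add: Let_def del: run_round.simps)
qed

lemma cost_cong: "(\<And>i. 1 \<le> i \<Longrightarrow> i \<le> t \<Longrightarrow> r i = r' i) \<Longrightarrow> 1 \<le> t \<Longrightarrow>
  round_cost n (Dr n r) c t = round_cost n (Dr n r') c t"
proof -
  assume ag: "\<And>i. 1 \<le> i \<Longrightarrow> i \<le> t \<Longrightarrow> r i = r' i" and t: "1 \<le> t"
  have h: "history n (Dr n r) c (t - 1) = history n (Dr n r') c (t - 1)"
    using ag by (intro hist_cong) auto
  have "r t = r' t" using ag t by simp
  then show ?thesis using h t by (simp add: round_cost_def Dr_def hist_len del: run_round.simps)
qed

lemma hist_faithful: "os \<in> set (history n D c t) \<Longrightarrow>
  \<exists>s\<in>{1..t}. \<forall>x\<in>set os. fst x < n \<and> snd x = c s (fst x)"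
proof (induction t)
  case 0 then show ?case by simp
next
  case (Suc t)
  let ?h = "history n D c t"
  have "os \<in> set ?h \<or> os = fst (run_round n (D ?h) (c (Suc t)) (Suc n) [])"
    using Suc.prems by (simp add: Let_def del: run_round.simps) blast
  then show ?case
  proof
    assume "os \<in> set ?h"
    then show ?thesis using Suc.IH by force
  next
    assume "os = fst (run_round n (D ?h) (c (Suc t)) (Suc n) [])"
    then have "\<forall>x\<in>set os. fst x < n \<and> snd x = c (Suc t) (fst x)"
      using run_faithful[of "[]" n "c (Suc t)" "D ?h" "Suc n"] by (simp del: run_round.simps)
    then show ?thesis by force
  qed
qed

lemma hist_V:
  assumes Ss: "Ss \<subseteq> {..<n}" and hit: "\<forall>s\<in>{1..t}. \<exists>b\<in>Ss. c s b = 0"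
  shows "Ss \<in> Vj n (history n D c t) (card Ss)"
proof -
  have "Ss \<inter> Z \<noteq> {}" if Z: "Z \<in> Kn n (history n D c t)" for Z
  proof -
    obtain os where os: "os \<in> set (history n D c t)" "{..<n} \<subseteq> fst ` set os" "Z = Zof os"
      using Z by (auto simp: Kn_def)
    obtain s where s: "s \<in> {1..t}" "\<forall>x\<in>set os. fst x < n \<and> snd x = c s (fst x)"
      using hist_faithful[OF os(1)] by blast
    obtain b where b: "b \<in> Ss" "c s b = 0" using hit s(1) by blast
    then have "b \<in> fst ` set os" using Ss os(2) by auto
    then obtain v where "(b, v) \<in> set os" by auto
    then have "(b, 0) \<in> set os" using s(2) b by force
    then show ?thesis using b os(3) by (auto simp: Zof_def)
  qed
  then show ?thesis using Ss by (auto simp: Vj_def)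
qed

definition dseed :: seed where "dseed = (False, \<lambda>_. {})"

lemma main_ind:
  fixes c :: "nat \<Rightarrow> nat \<Rightarrow> ennreal"
  assumes Ss: "Ss \<subseteq> {..<n}" and hit: "\<forall>s\<in>{1..T}. \<exists>b\<in>Ss. c s b = 0"
    and p: "0 \<le> p" "p \<le> 1" and a: "0 \<le> a" "(1 - p) * real n \<le> p * a"
  shows "m \<le> T \<Longrightarrow> (\<integral>\<^sup>+ r. (\<Sum>t\<in>{1..m}. round_cost n (Dr n r) c t)
            + ennreal (a * Phi n (history n (Dr n r) c m)) \<partial>Pi_pmf {1..m} dseed (\<lambda>_. mu n p))
         \<le> ennreal (real m * (real (card Ss) + p * real n) + a * Phi n [])"
proof (induction m)
  case 0 then show ?case by simp
next
  case (Suc m)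
  define Q where "Q = Pi_pmf {1..m} dseed (\<lambda>_. mu n p)"
  define hm where "hm = (\<lambda>f. history n (Dr n f) c m)"
  define B where "B = (\<lambda>y h. snd (run_round n (Dpol n y h) (c (Suc m)) (Suc n) []) +
            ennreal (a * Phi n (h @ [fst (run_round n (Dpol n y h) (c (Suc m)) (Suc n) [])])))"
  define A where "A = (\<lambda>f. (\<Sum>t\<in>{1..m}. round_cost n (Dr n f) c t))"
  define G where "G = (\<lambda>r. (\<Sum>t\<in>{1..Suc m}. round_cost n (Dr n r) c t)
            + ennreal (a * Phi n (history n (Dr n r) c (Suc m))))"
  have ins: "{1..Suc m} = insert (Suc m) {1..m}" by auto
  have Gupd: "G (f(Suc m := y)) = A f + B y (hm f)" for f y
  proof -
    let ?r = "f(Suc m := y)"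
    have ag: "\<And>i. 1 \<le> i \<Longrightarrow> i \<le> m \<Longrightarrow> ?r i = f i" by simp
    have h: "history n (Dr n ?r) c m = hm f" unfolding hm_def by (rule hist_cong) simp
    have s: "(\<Sum>t\<in>{1..m}. round_cost n (Dr n ?r) c t) = A f"
      unfolding A_def by (intro sum.cong refl cost_cong) auto
    have d: "Dr n ?r (hm f) = Dpol n y (hm f)" by (simp add: Dr_def hm_def hist_len)
    have rc: "round_cost n (Dr n ?r) c (Suc m) = snd (run_round n (Dpol n y (hm f)) (c (Suc m)) (Suc n) [])"
      using h d by (simp add: round_cost_def del: run_round.simps)
    have hs: "history n (Dr n ?r) c (Suc m) = hm f @ [fst (run_round n (Dpol n y (hm f)) (c (Suc m)) (Suc n) [])]"
      using h d by (simp add: Let_def del: run_round.simps)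
    show ?thesis unfolding G_def ins using s rc hs
      by (simp add: B_def add.assoc del: run_round.simps)
  qed
  have stepB: "(\<integral>\<^sup>+ y. B y (hm f) \<partial>mu n p) \<le> ennreal (real (card Ss) + p * real n + a * Phi n (hm f))" for f
  proof -
    have "Ss \<in> Vj n (hm f) (card Ss)" unfolding hm_def
      using Ss hit Suc.prems by (intro hist_V) auto
    moreover have "\<exists>b\<in>Ss. c (Suc m) b = 0" using hit Suc.prems by auto
    ultimately show ?thesis unfolding B_def by (rule round_step[OF _ _ p a])
  qed
  have "(\<integral>\<^sup>+ r. G r \<partial>Pi_pmf {1..Suc m} dseed (\<lambda>_. mu n p))
        = (\<integral>\<^sup>+ z. G ((snd z)(Suc m := fst z)) \<partial>pair_pmf (mu n p) Q)"
    unfolding ins Q_def by (subst Pi_pmf_insert) (auto simp: case_prod_beta)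
  also have "\<dots> = (\<integral>\<^sup>+ z. G ((fst z)(Suc m := snd z)) \<partial>pair_pmf Q (mu n p))"
    by (subst pair_commute_pmf) (simp add: case_prod_beta)
  also have "\<dots> = (\<integral>\<^sup>+ f. \<integral>\<^sup>+ y. A f + B y (hm f) \<partial>mu n p \<partial>Q)"
    by (simp add: nn_integral_pair_pmf' Gupd)
  also have "\<dots> = (\<integral>\<^sup>+ f. A f + \<integral>\<^sup>+ y. B y (hm f) \<partial>mu n p \<partial>Q)"
    by (intro nn_integral_cong) (simp add: nn_integral_add)
  also have "\<dots> \<le> (\<integral>\<^sup>+ f. A f + ennreal (real (card Ss) + p * real n + a * Phi n (hm f)) \<partial>Q)"
    by (intro nn_integral_mono add_mono order.refl stepB)
  also have "\<dots> = (\<integral>\<^sup>+ f. (A f + ennreal (a * Phi n (hm f))) + ennreal (real (card Ss) + p * real n) \<partial>Q)"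
    using p a Phi_nonneg by (intro nn_integral_cong) (simp add: ennreal_plus[symmetric] add_ac del: ennreal_plus)
  also have "\<dots> = (\<integral>\<^sup>+ f. A f + ennreal (a * Phi n (hm f)) \<partial>Q) + ennreal (real (card Ss) + p * real n)"
    by (simp add: nn_integral_add)
  also have "\<dots> \<le> ennreal (real m * (real (card Ss) + p * real n) + a * Phi n []) + ennreal (real (card Ss) + p * real n)"
    using Suc by (intro add_mono order.refl) (simp add: A_def hm_def Q_def)
  also have "\<dots> = ennreal (real (Suc m) * (real (card Ss) + p * real n) + a * Phi n [])"
    using p a Phi_nonneg[of n "[]"] by (simp add: ennreal_plus[symmetric] algebra_simps del: ennreal_plus)
  finally show ?case unfolding G_def .
qed



lemma alg_bound:
  fixes c :: "nat \<Rightarrow> nat \<Rightarrow> ennreal"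
  assumes Ss: "Ss \<subseteq> {..<n}" and hit: "\<forall>s\<in>{1..T}. \<exists>b\<in>Ss. c s b = 0"
    and p: "0 \<le> p" "p \<le> 1" and a: "0 \<le> a" "(1 - p) * real n \<le> p * a"
  shows "(\<integral>\<^sup>+ D. (\<Sum>t\<in>{1..T}. round_cost n D c t) \<partial>measure_pmf (map_pmf (Dr n) (Pi_pmf {1..T} dseed (\<lambda>_. mu n p))))
     \<le> ennreal (real T * (real (card Ss) + p * real n) + a * (real n + 1) ^ 2)"
proof -
  have "(\<integral>\<^sup>+ D. (\<Sum>t\<in>{1..T}. round_cost n D c t) \<partial>measure_pmf (map_pmf (Dr n) (Pi_pmf {1..T} dseed (\<lambda>_. mu n p))))
     = (\<integral>\<^sup>+ r. (\<Sum>t\<in>{1..T}. round_cost n (Dr n r) c t) \<partial>Pi_pmf {1..T} dseed (\<lambda>_. mu n p))"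
    by simp
  also have "\<dots> \<le> (\<integral>\<^sup>+ r. (\<Sum>t\<in>{1..T}. round_cost n (Dr n r) c t)
            + ennreal (a * Phi n (history n (Dr n r) c T)) \<partial>Pi_pmf {1..T} dseed (\<lambda>_. mu n p))"
    by (intro nn_integral_mono) simp
  also have "\<dots> \<le> ennreal (real T * (real (card Ss) + p * real n) + a * Phi n [])"
    by (rule main_ind[OF Ss hit p a]) simp
  also have "\<dots> \<le> ennreal (real T * (real (card Ss) + p * real n) + a * (real n + 1) ^ 2)"
    using a Phi_bound[of n "[]"] by (intro ennreal_leI add_mono order.refl mult_left_mono) auto
  finally show ?thesis .
qed

lemma OPT_attained:
  assumes "valid_scenarios n T c"
  shows "\<exists>Ss. Ss \<subseteq> {..<n} \<and> (\<forall>t\<in>{1..T}. \<exists>b\<in>Ss. c t b = 0) \<and> OPT n T c = of_nat (card Ss)"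
proof -
  define I where "I = na_cost T c ` Pow {..<n}"
  have fin: "finite I" "I \<noteq> {}" by (auto simp: I_def)
  have "OPT n T c = Min I" using Min_Inf[OF fin] by (simp add: OPT_def I_def)
  then have "OPT n T c \<in> I" using Min_in[OF fin] by simp
  then obtain Ss where Ss: "Ss \<subseteq> {..<n}" "OPT n T c = na_cost T c Ss" by (auto simp: I_def)
  have "na_cost T c {..<n} = of_nat n"
    using assms by (auto simp: na_cost_def valid_scenarios_def)
  moreover have "OPT n T c \<le> na_cost T c {..<n}"
    unfolding OPT_def by (rule INF_lower) simp
  ultimately have le: "na_cost T c Ss \<le> of_nat n" using Ss(2) by simp
  have "na_cost T c Ss \<noteq> \<infinity>"
  proof
    assume "na_cost T c Ss = \<infinity>"
    then have "(of_nat n :: ennreal) = \<infinity>" using le by (simp add: top_unique)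
    then show False by simp
  qed
  then have "\<forall>t\<in>{1..T}. \<exists>b\<in>Ss. c t b = 0" "na_cost T c Ss = of_nat (card Ss)"
    by (auto simp: na_cost_def split: if_splits)
  then show ?thesis using Ss by auto
qed

lemma final_real:
  fixes n T :: nat and p a :: real
  assumes n: "1 \<le> n" and T: "1 \<le> T"
    and p_def: "p = (if real T \<le> (real n + 1) ^ 2 then 1 else (real n + 1) / sqrt (real T))"
    and a_def: "a = (if real T \<le> (real n + 1) ^ 2 then 0 else real n / p)"
  shows "0 \<le> p" "p \<le> 1" "0 \<le> a" "(1 - p) * real n \<le> p * a"
    "p * real n + a * (real n + 1) ^ 2 / real T \<le> 4 * real n ^ 2 / sqrt (real T)"
proof -
  define s where "s = sqrt (real T)"
  have s0: "0 < s" using T by (simp add: s_def)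
  have sT: "s * s = real T" using T by (simp add: s_def)
  have n1: "real n + 1 \<le> 2 * real n" using n by simp
  have "0 \<le> p \<and> p \<le> 1 \<and> 0 \<le> a \<and> (1 - p) * real n \<le> p * a \<and>
    p * real n + a * (real n + 1) ^ 2 / real T \<le> 4 * real n ^ 2 / s"
  proof (cases "real T \<le> (real n + 1) ^ 2")
    case True
    then have pa: "p = 1" "a = 0" using p_def a_def by auto
    have "s \<le> real n + 1" using True unfolding s_def
      by (metis abs_of_nonneg of_nat_0_le_iff add_nonneg_nonneg zero_le_one real_sqrt_abs real_sqrt_le_mono)
    then have "s \<le> 4 * real n" using n by simp
    then have "real n * s \<le> real n * (4 * real n)" by (intro mult_left_mono) auto
    then have "real n \<le> 4 * real n ^ 2 / s" using s0 by (simp add: field_simps power2_eq_square)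
    then show ?thesis using pa by simp
  next
    case False
    then have "(real n + 1) ^ 2 < s * s" using sT by simp
    then have sn: "real n + 1 < s" using s0 by (metis power2_eq_square abs_of_pos add_pos_nonneg of_nat_0_le_iff zero_less_one power2_less_imp_less less_imp_le)
    have pv: "p = (real n + 1) / s" using False p_def s_def by simp
    have p0: "0 < p" using pv s0 by simp
    have av: "a = real n / p" using False a_def by simp
    have "p \<le> 1" using pv sn s0 by simp
    moreover have "p * a = real n" using av p0 by simp
    moreover have "(1 - p) * real n \<le> real n" using p0 by (simp add: algebra_simps)
    moreover have "p * real n + a * (real n + 1) ^ 2 / real T = 2 * real n * (real n + 1) / s"
    proof -
      have n0: "0 < real n + 1" by simp
      have av': "a = real n * s / (real n + 1)" using av pv s0 n0 by (simp add: field_simps)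
      have e: "a * (real n + 1) = real n * s" using av' n0 by simp
      have "a * (real n + 1) ^ 2 = (a * (real n + 1)) * (real n + 1)" by (simp add: power2_eq_square)
      also have "\<dots> = (real n * (real n + 1)) * s" unfolding e by simp
      finally have e2: "a * (real n + 1) ^ 2 / real T = real n * (real n + 1) / s"
        unfolding sT[symmetric] using s0 by simp
      have e1: "p * real n = real n * (real n + 1) / s" unfolding pv by simp
      show ?thesis unfolding e1 e2 by (simp add: field_simps)
    qed
    moreover have "2 * real n * (real n + 1) / s \<le> 4 * real n ^ 2 / s"
      using n1 s0 by (intro divide_right_mono) (auto simp: power2_eq_square intro: mult_left_mono)
    ultimately show ?thesis using p0 av by simp
  qed
  then show "0 \<le> p" "p \<le> 1" "0 \<le> a" "(1 - p) * real n \<le> p * a"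
    "p * real n + a * (real n + 1) ^ 2 / real T \<le> 4 * real n ^ 2 / sqrt (real T)"
    by (auto simp: s_def)
qed

theorem theorem5p3:
  shows "\<exists>C::real. \<forall>n T::nat. T \<ge> 1 \<longrightarrow>
           (\<exists>A :: det_alg pmf. \<forall>c. valid_scenarios n T c \<longrightarrow>
              ennreal (1 / real T) * (\<integral>\<^sup>+ D. (\<Sum>t\<in>{1..T}. round_cost n D c t) \<partial>measure_pmf A)
                \<le> OPT n T c + (OPT n T c + ennreal (C * real n ^ 2 / sqrt (real T))))"
proof (intro exI[of _ 4] allI impI)
  fix n T :: nat assume T: "T \<ge> 1"
  define p where "p = (if real T \<le> (real n + 1) ^ 2 then 1 else (real n + 1) / sqrt (real T))"
  define a where "a = (if real T \<le> (real n + 1) ^ 2 then 0 else real n / p)"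
  show "\<exists>A :: det_alg pmf. \<forall>c. valid_scenarios n T c \<longrightarrow>
              ennreal (1 / real T) * (\<integral>\<^sup>+ D. (\<Sum>t\<in>{1..T}. round_cost n D c t) \<partial>measure_pmf A)
                \<le> OPT n T c + (OPT n T c + ennreal (4 * real n ^ 2 / sqrt (real T)))"
  proof (intro exI[of _ "map_pmf (Dr n) (Pi_pmf {1..T} dseed (\<lambda>_. mu n p))"] allI impI)
    fix c assume v: "valid_scenarios n T c"
    have n: "1 \<le> n" using v T by (auto simp: valid_scenarios_def)
    note fr = final_real[OF n T p_def a_def]
    obtain Ss where Ss: "Ss \<subseteq> {..<n}" "\<forall>t\<in>{1..T}. \<exists>b\<in>Ss. c t b = 0" "OPT n T c = of_nat (card Ss)"
      using OPT_attained[OF v] by blast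
    define Y where "Y = real T * (real (card Ss) + p * real n) + a * (real n + 1) ^ 2"
    have Y0: "0 \<le> Y" using fr by (simp add: Y_def)
    have bnd: "(\<integral>\<^sup>+ D. (\<Sum>t\<in>{1..T}. round_cost n D c t) \<partial>measure_pmf (map_pmf (Dr n) (Pi_pmf {1..T} dseed (\<lambda>_. mu n p))))
        \<le> ennreal Y" unfolding Y_def by (rule alg_bound[OF Ss(1,2) fr(1-4)])
    have "ennreal (1 / real T) * (\<integral>\<^sup>+ D. (\<Sum>t\<in>{1..T}. round_cost n D c t) \<partial>measure_pmf (map_pmf (Dr n) (Pi_pmf {1..T} dseed (\<lambda>_. mu n p))))
        \<le> ennreal (1 / real T) * ennreal Y" by (intro mult_left_mono bnd) simp
    also have "\<dots> = ennreal (Y / real T)" by (simp add: ennreal_mult'[symmetric])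
    also have "Y / real T = real (card Ss) + (p * real n + a * (real n + 1) ^ 2 / real T)"
      using T by (simp add: Y_def field_simps)
    also have "ennreal \<dots> \<le> ennreal (real (card Ss) + 4 * real n ^ 2 / sqrt (real T))"
      using fr(5) by (intro ennreal_leI) simp
    also have "\<dots> = OPT n T c + ennreal (4 * real n ^ 2 / sqrt (real T))"
      using Ss(3) by (simp add: ennreal_of_nat_eq_real_of_nat)
    also have "\<dots> \<le> OPT n T c + (OPT n T c + ennreal (4 * real n ^ 2 / sqrt (real T)))"
      by (intro add_mono order.refl) simp
    finally show "ennreal (1 / real T) * (\<integral>\<^sup>+ D. (\<Sum>t\<in>{1..T}. round_cost n D c t) \<partial>measure_pmf (map_pmf (Dr n) (Pi_pmf {1..T} dseed (\<lambda>_. mu n p))))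
        \<le> OPT n T c + (OPT n T c + ennreal (4 * real n ^ 2 / sqrt (real T)))" .
  qed
qed

end
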